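(* Let $t_*<t^*$ and $T=[t_*,t^*]$. Suppose $q$ is non-decreasing and $p$ is continuous and strictly increasing on some open interval containing $T$, and let $p^{-1}$ denote the inverse of $p$. Suppose that for some $j_0$ the sequence defined by $t_1=t_*$ and $t_{j+1}=p^{-1}(q(t_j))$, $j=1,\dots,j_0-1$, is well defined, strictly increasing, and satisfies $t_{j_0}>t^*>t_{j_0-1}$. Then $q(t)>p(t)$ for all $t\in T$. *)

theory Defs
  imports "HOL-Analysis.Analysis"
begin

end

theory Submission
  imports Defs
begin

theorem lemma2p1:
  fixes t :: "nat \<Rightarrow> real" and p q :: "real \<Rightarrow> real"
  fixes tlo thi :: real and I :: "real set" and j0 :: nat
  assumes "tlo < thi"
    and "open I" and "is_interval I" and "{tlo..thi} \<subseteq> I"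
    and "mono_on I q"
    and "continuous_on I p" and "strict_mono_on I p"
    and "t 1 = tlo"
    and "\<forall>j. 1 \<le> j \<and> j < j0 \<longrightarrow>
           q (t j) \<in> p ` I \<and> t (Suc j) = the_inv_into I p (q (t j))"
    and "\<forall>j. 1 \<le> j \<and> j < j0 \<longrightarrow> t j < t (Suc j)"
    and "j0 \<ge> 2"
    and "t j0 > thi" and "thi > t (j0 - 1)"
  shows "\<forall>x\<in>{tlo..thi}. q x > p x"
proof
  fix x assume x: "x \<in> {tlo..thi}"
  have inj: "inj_on p I" using assms(7) strict_mono_on_imp_inj_on by blast
  have tI: "t (Suc j) \<in> I" and tp: "p (t (Suc j)) = q (t j)" if "1 \<le> j" "j < j0" for j
  proof -
    have h: "q (t j) \<in> p ` I" "t (Suc j) = the_inv_into I p (q (t j))" using assms(9) that by auto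
    show "t (Suc j) \<in> I" using h the_inv_into_into[OF inj h(1)] by simp
    show "p (t (Suc j)) = q (t j)" using h f_the_inv_into_f[OF inj h(1)] by simp
  qed
  have tI': "t j \<in> I" if "1 \<le> j" "j < j0" for j
  proof (cases j)
    case 0 then show ?thesis using that by simp
  next
    case (Suc k)
    show ?thesis
    proof (cases "k = 0")
      case True then show ?thesis using Suc assms(4,8) assms(1) by auto
    next
      case False then show ?thesis using Suc that tI[of k] by auto
    qed
  qed
  define S where "S = {j. 1 \<le> j \<and> j < j0 \<and> t j \<le> x}"
  have "1 \<in> S" using S_def assms x by auto
  have fS: "finite S" unfolding S_def by auto
  define j where "j = Max S"
  have jS: "j \<in> S" using fS \<open>1 \<in> S\<close> j_def Max_in by blast
  have j1: "1 \<le> j" "j < j0" "t j \<le> x" using jS S_def by auto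
  have lt: "x < t (Suc j)"
  proof (cases "Suc j = j0")
    case True then show ?thesis using assms(12) x by auto
  next
    case False
    show ?thesis
    proof (rule ccontr)
      assume "\<not> x < t (Suc j)"
      then have "Suc j \<in> S" using False j1 S_def by auto
      then have "Suc j \<le> j" using fS j_def Max_ge by blast
      then show False by simp
    qed
  qed
  have xI: "x \<in> I" using x assms(4) by auto
  have "q (t j) \<le> q x" using assms(5) tI'[OF j1(1,2)] xI j1(3) by (simp add: mono_on_def)
  moreover have "p x < p (t (Suc j))"
    using assms(7) xI tI[OF j1(1,2)] lt by (simp add: strict_mono_on_def)
  ultimately show "q x > p x" using tp[OF j1(1,2)] by simp
qed

end
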